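(* For any HPS $h$ and any H-Qbricks program $p$, let $S=\{\eta:\xi(h)(\eta)\ne0\}$. If $\xi([\![p]\!](h))(\eta)\neq 0$, then $\eta\ge\eta'$ for some $\eta'\in S$. In particular, if $\xi(h)$ and $\xi(h')$ have disjoint supports of histories, all of the same length $l$, and $p,q$ are any two programs, then $\xi([\![p]\!](h))$ and $\xi([\![q]\!](h'))$ have disjoint supports.
   Context: HPS: $h=\langle P,o,s\rangle_{su}$ with $su$ a finite set of Boolean path variables; $o_{Qu}$ a finite map from quantum addresses to Boolean polynomials in the path variables; $o_{Cl}$ a stack of maps from classical addresses to such polynomials recording classical values at successive time steps (top = current); $P$ a dyadic-coefficient polynomial; $s$ a real scalar expression. A history $\eta$ is a full instantiation of a classical stack, $|\eta|$ its height; $\eta\le\eta'$ means $|\eta|\le|\eta'|$ and the $|\eta|$ oldest entries of $\eta'$ coincide with $\eta$. $\xi(h)(\eta)=\sum_{\vec y\in\{0,1\}^{su},o_{Cl}(\vec y)=\eta}s(\vec y)e^{2\pi iP(\vec y)}|o_{Qu}(\vec y)\rangle$; its support is the set of $\eta$ with $\xi(h)(\eta)\ne0$. $h_1\boxplus h_2$: support $su_1\cup su_2\cup\{y_f\}$, $y_f$ fresh, equal to $h_1$ (scalar times $\prod_{y\in su_2\setminus su_1}y$) on $y_f=0$ and $h_2$ (scalar times $\prod_{y\in su_1\setminus su_2}y$) on $y_f=1$. Programs: Skip; Init $q$; Apply $G(q)$, $G\in\{H,X\}\cup\{Z_k\}$; Measure$(q,c)$; $c_1:=f(c_2)$; $p;p'$;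 For with constant bounds; If $b$ then $p$ else $p'$ ($b$ classical, or quantum with unitary branches disjoint from $b$'s registers). Semantics ($\lceil q\rceil$ = current contents): Skip identity; Init sets $q$ to $0$; $H$: fresh $y$ in support, scalar times $1/\sqrt2$, phase plus $y\lceil q\rceil/2$, $q:=y$; $X$: $q:=1\oplus\lceil q\rceil$; $Z_k$: phase plus $\lceil q\rceil/2^k$; Measure$(q,c)$ pushes onto $o_{Cl}$ a copy of the top entry with $c$ holding $\lceil q\rceil$; $c_1:=f(c_2)$ pushes a copy with $c_1$ holding $f(\lceil c_2\rceil)$; sequencing is composition; For unfolds; $[\![\mathrm{If}\,b\,\mathrm{then}\,p\,\mathrm{else}\,p']\!]h=[\![p]\!](b\cdot h)\boxplus[\![p']\!]((1-b)\cdot h)$, $b\cdot h$ multiplying the scalar by $b$. *)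

theory Defs
  imports "HOL-Analysis.Analysis" "HOL-Library.Sublist"
begin

datatype bexp = BConst bool | BVar nat | BXor bexp bexp | BAnd bexp bexp

primrec beval :: "(nat \<Rightarrow> bool) \<Rightarrow> bexp \<Rightarrow> bool" where
  "beval v (BConst b) = b"
| "beval v (BVar y) = v y"
| "beval v (BXor a b) = (beval v a \<noteq> beval v b)"
| "beval v (BAnd a b) = (beval v a \<and> beval v b)"

primrec bvars :: "bexp \<Rightarrow> nat set" where
  "bvars (BConst b) = {}"
| "bvars (BVar y) = {y}"
| "bvars (BXor a b) = bvars a \<union> bvars b"
| "bvars (BAnd a b) = bvars a \<union> bvars b"

datatype pexp = PConst int nat | PVar nat | PBool bexp | PAdd pexp pexp | PMul pexp pexp

primrec peval :: "(nat \<Rightarrow> bool) \<Rightarrow> pexp \<Rightarrow> real" where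
  "peval v (PConst k n) = of_int k / 2 ^ n"
| "peval v (PVar y) = of_bool (v y)"
| "peval v (PBool e) = of_bool (beval v e)"
| "peval v (PAdd a b) = peval v a + peval v b"
| "peval v (PMul a b) = peval v a * peval v b"

primrec pvars :: "pexp \<Rightarrow> nat set" where
  "pvars (PConst k n) = {}"
| "pvars (PVar y) = {y}"
| "pvars (PBool e) = bvars e"
| "pvars (PAdd a b) = pvars a \<union> pvars b"
| "pvars (PMul a b) = pvars a \<union> pvars b"

datatype sexp = SConst real | SBool bexp | SAdd sexp sexp | SMul sexp sexp | SNeg sexp

primrec seval :: "(nat \<Rightarrow> bool) \<Rightarrow> sexp \<Rightarrow> real" where
  "seval v (SConst r) = r"
| "seval v (SBool e) = of_bool (beval v e)"
| "seval v (SAdd a b) = seval v a + seval v b"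
| "seval v (SMul a b) = seval v a * seval v b"
| "seval v (SNeg a) = - seval v a"

primrec svars :: "sexp \<Rightarrow> nat set" where
  "svars (SConst r) = {}"
| "svars (SBool e) = bvars e"
| "svars (SAdd a b) = svars a \<union> svars b"
| "svars (SMul a b) = svars a \<union> svars b"
| "svars (SNeg a) = svars a"

text \<open>The classical stack is a list, oldest entry first; the top (current) entry is the last one.\<close>
record hps =
  hsu  :: "nat set"
  hP   :: pexp
  hs   :: sexp
  hoQu :: "nat \<rightharpoonup> bexp"
  hoCl :: "(nat \<rightharpoonup> bexp) list"

definition top :: "(nat \<rightharpoonup> bexp) list \<Rightarrow> (nat \<rightharpoonup> bexp)" where
  "top st = (if st = [] then Map.empty else last st)"

definition wf_hps :: "hps \<Rightarrow> bool" where
  "wf_hps h \<longleftrightarrow> finite (hsu h) \<and> finite (dom (hoQu h))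
     \<and> pvars (hP h) \<subseteq> hsu h \<and> svars (hs h) \<subseteq> hsu h
     \<and> (\<forall>e \<in> ran (hoQu h). bvars e \<subseteq> hsu h)
     \<and> (\<forall>m \<in> set (hoCl h). finite (dom m) \<and> (\<forall>e \<in> ran m. bvars e \<subseteq> hsu h))"

text \<open>Instantiations of the path variables of \<open>su\<close> (variables outside \<open>su\<close> are fixed to 0).\<close>
definition assignments :: "nat set \<Rightarrow> (nat \<Rightarrow> bool) set" where
  "assignments A = {v. \<forall>x. x \<notin> A \<longrightarrow> \<not> v x}"

type_synonym history = "(nat \<rightharpoonup> bool) list"
type_synonym basis = "nat \<rightharpoonup> bool"

definition instMap :: "(nat \<Rightarrow> bool) \<Rightarrow> (nat \<rightharpoonup> bexp) \<Rightarrow> (nat \<rightharpoonup> bool)" where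
  "instMap v m = (\<lambda>k. map_option (beval v) (m k))"

text \<open>\<open>xi h \<eta>\<close> is the (unnormalised) quantum state attached to history \<open>\<eta>\<close>,
  given by its coordinates in the computational basis.\<close>
definition xi :: "hps \<Rightarrow> history \<Rightarrow> basis \<Rightarrow> complex" where
  "xi h \<eta> = (\<lambda>b. \<Sum>v \<in> {v \<in> assignments (hsu h). map (instMap v) (hoCl h) = \<eta>
                                   \<and> instMap v (hoQu h) = b}.
              complex_of_real (seval v (hs h)) * cis (2 * pi * peval v (hP h)))"

definition hsupport :: "hps \<Rightarrow> history set" where
  "hsupport h = {\<eta>. xi h \<eta> \<noteq> (\<lambda>_. 0)}"

definition fresh :: "nat set \<Rightarrow> nat" where
  "fresh A = (LEAST n. n \<notin> A)"

definition dflt :: "(nat \<rightharpoonup> bexp) \<Rightarrow> nat \<Rightarrow> bexp" where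
  "dflt m k = (case m k of Some e \<Rightarrow> e | None \<Rightarrow> BConst False)"

definition muxb :: "nat \<Rightarrow> bexp \<Rightarrow> bexp \<Rightarrow> bexp" where
  "muxb y a b = BXor a (BAnd (BVar y) (BXor a b))"

definition mux_map :: "nat \<Rightarrow> (nat \<rightharpoonup> bexp) \<Rightarrow> (nat \<rightharpoonup> bexp) \<Rightarrow> (nat \<rightharpoonup> bexp)" where
  "mux_map y m1 m2 = (\<lambda>k. if k \<in> dom m1 \<union> dom m2 then Some (muxb y (dflt m1 k) (dflt m2 k)) else None)"

definition pad :: "nat \<Rightarrow> (nat \<rightharpoonup> bexp) list \<Rightarrow> (nat \<rightharpoonup> bexp) list" where
  "pad n st = st @ replicate (n - length st) (top st)"

definition mux_stack :: "nat \<Rightarrow> (nat \<rightharpoonup> bexp) list \<Rightarrow> (nat \<rightharpoonup> bexp) list \<Rightarrow> (nat \<rightharpoonup> bexp) list" where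
  "mux_stack y s1 s2 = (let n = max (length s1) (length s2) in map2 (mux_map y) (pad n s1) (pad n s2))"

definition varprod :: "nat set \<Rightarrow> sexp" where
  "varprod A = foldr (\<lambda>y e. SMul (SBool (BVar y)) e) (sorted_list_of_set A) (SConst 1)"

definition boxplus :: "hps \<Rightarrow> hps \<Rightarrow> hps" where
  "boxplus h1 h2 = (let yf = fresh (hsu h1 \<union> hsu h2) in
     \<lparr> hsu = hsu h1 \<union> hsu h2 \<union> {yf},
       hP = PAdd (hP h1) (PMul (PVar yf) (PAdd (hP h2) (PMul (PConst (-1) 0) (hP h1)))),
       hs = SAdd (SMul (SBool (BXor (BConst True) (BVar yf))) (SMul (hs h1) (varprod (hsu h2 - hsu h1))))
                 (SMul (SBool (BVar yf)) (SMul (hs h2) (varprod (hsu h1 - hsu h2)))),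
       hoQu = mux_map yf (hoQu h1) (hoQu h2),
       hoCl = mux_stack yf (hoCl h1) (hoCl h2) \<rparr>)"

datatype gate = GH | GX | GZ nat

datatype cond = CConst bool | CCl nat | CQu nat | CNot cond | CAnd cond cond | CXor cond cond

primrec cregs :: "cond \<Rightarrow> nat set" where
  "cregs (CConst b) = {}" | "cregs (CCl c) = {c}" | "cregs (CQu q) = {}"
| "cregs (CNot a) = cregs a" | "cregs (CAnd a b) = cregs a \<union> cregs b"
| "cregs (CXor a b) = cregs a \<union> cregs b"

primrec qregs :: "cond \<Rightarrow> nat set" where
  "qregs (CConst b) = {}" | "qregs (CCl c) = {}" | "qregs (CQu q) = {q}"
| "qregs (CNot a) = qregs a" | "qregs (CAnd a b) = qregs a \<union> qregs b"
| "qregs (CXor a b) = qregs a \<union> qregs b"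

text \<open>\<open>Assign c1 f c2\<close> is \<open>c1 := f(c2)\<close>; \<open>For a b body\<close> runs \<open>body i\<close> for \<open>i = a, ..., b\<close>.\<close>
datatype prog = Skip | Init nat | Apply gate nat | Measure nat nat
  | Assign nat "bool \<Rightarrow> bool" nat | Seq prog prog
  | For nat nat "nat \<Rightarrow> prog" | If cond prog prog

definition qval :: "hps \<Rightarrow> nat \<Rightarrow> bexp" where
  "qval h q = dflt (hoQu h) q"

definition cval :: "hps \<Rightarrow> nat \<Rightarrow> bexp" where
  "cval h c = dflt (top (hoCl h)) c"

primrec ceval :: "hps \<Rightarrow> cond \<Rightarrow> bexp" where
  "ceval h (CConst b) = BConst b"
| "ceval h (CCl c) = cval h c"
| "ceval h (CQu q) = qval h q"
| "ceval h (CNot a) = BXor (BConst True) (ceval h a)"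
| "ceval h (CAnd a b) = BAnd (ceval h a) (ceval h b)"
| "ceval h (CXor a b) = BXor (ceval h a) (ceval h b)"

definition fpoly :: "(bool \<Rightarrow> bool) \<Rightarrow> bexp \<Rightarrow> bexp" where
  "fpoly f e = BXor (BConst (f False)) (BAnd (BConst (f False \<noteq> f True)) e)"

definition scale :: "sexp \<Rightarrow> hps \<Rightarrow> hps" where
  "scale e h = h\<lparr>hs := SMul (hs h) e\<rparr>"

primrec sem :: "prog \<Rightarrow> hps \<Rightarrow> hps" where
  "sem Skip h = h"
| "sem (Init q) h = h\<lparr>hoQu := (hoQu h)(q \<mapsto> BConst False)\<rparr>"
| "sem (Apply g q) h = (case g of
     GH \<Rightarrow> (let y = fresh (hsu h) in
             h\<lparr>hsu := insert y (hsu h),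
               hs := SMul (hs h) (SConst (1 / sqrt 2)),
               hP := PAdd (hP h) (PMul (PConst 1 1) (PMul (PVar y) (PBool (qval h q)))),
               hoQu := (hoQu h)(q \<mapsto> BVar y)\<rparr>)
   | GX \<Rightarrow> h\<lparr>hoQu := (hoQu h)(q \<mapsto> BXor (BConst True) (qval h q))\<rparr>
   | GZ k \<Rightarrow> h\<lparr>hP := PAdd (hP h) (PMul (PConst 1 k) (PBool (qval h q)))\<rparr>)"
| "sem (Measure q c) h = h\<lparr>hoCl := hoCl h @ [(top (hoCl h))(c \<mapsto> qval h q)]\<rparr>"
| "sem (Assign c1 f c2) h = h\<lparr>hoCl := hoCl h @ [(top (hoCl h))(c1 \<mapsto> fpoly f (cval h c2))]\<rparr>"
| "sem (Seq p p') h = sem p' (sem p h)"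
| "sem (For a b body) h = fold (\<lambda>i. sem (body i)) [a..<Suc b] h"
| "sem (If b p p') h =
     boxplus (sem p (scale (SBool (ceval h b)) h))
             (sem p' (scale (SAdd (SConst 1) (SNeg (SBool (ceval h b)))) h))"

primrec acts :: "prog \<Rightarrow> nat set" where
  "acts Skip = {}" | "acts (Init q) = {q}" | "acts (Apply g q) = {q}"
| "acts (Measure q c) = {q}" | "acts (Assign c1 f c2) = {}"
| "acts (Seq p p') = acts p \<union> acts p'"
| "acts (For a b body) = (\<Union>i\<in>{a..b}. acts (body i))"
| "acts (If b p p') = qregs b \<union> acts p \<union> acts p'"

primrec unitary :: "prog \<Rightarrow> bool" where
  "unitary Skip = True" | "unitary (Init q) = False" | "unitary (Apply g q) = True"
| "unitary (Measure q c) = False" | "unitary (Assign c1 f c2) = False"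
| "unitary (Seq p p') = (unitary p \<and> unitary p')"
| "unitary (For a b body) = (\<forall>i\<in>{a..b}. unitary (body i))"
| "unitary (If b p p') = (cregs b = {} \<and> qregs b \<inter> (acts p \<union> acts p') = {}
                          \<and> unitary p \<and> unitary p')"

text \<open>H-Qbricks programs: conditions are classical, or quantum with unitary branches
  disjoint from the condition's registers.\<close>
primrec wf_prog :: "prog \<Rightarrow> bool" where
  "wf_prog Skip = True" | "wf_prog (Init q) = True" | "wf_prog (Apply g q) = True"
| "wf_prog (Measure q c) = True" | "wf_prog (Assign c1 f c2) = True"
| "wf_prog (Seq p p') = (wf_prog p \<and> wf_prog p')"
| "wf_prog (For a b body) = (\<forall>i\<in>{a..b}. wf_prog (body i))"
| "wf_prog (If b p p') = (wf_prog p \<and> wf_prog p' \<and>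
     (qregs b = {} \<or> (cregs b = {} \<and> unitary p \<and> unitary p'
                       \<and> qregs b \<inter> (acts p \<union> acts p') = {})))"

end

theory Submission
  imports Defs
begin


definition A :: "hps \<Rightarrow> (nat \<Rightarrow> bool) \<Rightarrow> complex" where
  "A h v = complex_of_real (seval v (hs h)) * cis (2 * pi * peval v (hP h))"
definition H :: "hps \<Rightarrow> (nat \<Rightarrow> bool) \<Rightarrow> history" where
  "H h v = map (instMap v) (hoCl h)"
definition B :: "hps \<Rightarrow> (nat \<Rightarrow> bool) \<Rightarrow> basis" where
  "B h v = instMap v (hoQu h)"
definition rs :: "nat set \<Rightarrow> (nat \<Rightarrow> bool) \<Rightarrow> nat \<Rightarrow> bool" where
  "rs S v = (\<lambda>x. x \<in> S \<and> v x)"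
definition ws :: "nat set \<Rightarrow> (nat \<Rightarrow> bool) \<Rightarrow> nat \<Rightarrow> bool" where
  "ws S v = (\<lambda>x. x \<notin> S \<and> v x)"
definition key :: "hps \<Rightarrow> (nat \<Rightarrow> bool) \<Rightarrow> history \<times> basis \<times> (nat \<Rightarrow> bool)" where
  "key h v = (H h (rs (hsu h) v), B h (rs (hsu h) v), ws (hsu h) v)"
definition Z :: "hps \<Rightarrow> hps \<Rightarrow> bool" where
  "Z h h' \<longleftrightarrow> (\<forall>\<eta>'. xi h' \<eta>' \<noteq> (\<lambda>_. 0) \<longrightarrow> (\<exists>\<eta>. prefix \<eta> \<eta>' \<and> xi h \<eta> \<noteq> (\<lambda>_. 0)))"

lemma xi_alt: "xi h \<eta> b = sum (A h) {v \<in> assignments (hsu h). H h v = \<eta> \<and> B h v = b}"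
  by (simp add: xi_def A_def H_def B_def)

lemma finite_assignments: "finite S \<Longrightarrow> finite (assignments S)"
proof -
  assume f: "finite S"
  have "assignments S \<subseteq> (\<lambda>T x. x \<in> T) ` Pow S"
  proof
    fix v assume "v \<in> assignments S"
    then have "v = (\<lambda>x. x \<in> {x\<in>S. v x})" "{x\<in>S. v x} \<in> Pow S"
      by (auto simp: assignments_def)
    then show "v \<in> (\<lambda>T x. x \<in> T) ` Pow S" by blast
  qed
  then show ?thesis using f by (meson finite_Pow_iff finite_imageI finite_subset)
qed

lemma Z_trans: "Z h1 h2 \<Longrightarrow> Z h2 h3 \<Longrightarrow> Z h1 h3"
  unfolding Z_def by (meson prefix_order.trans)

lemma sum_nz_group:
  assumes "finite S" "sum f S \<noteq> (0::complex)"
  shows "\<exists>k \<in> g ` S. sum f {x \<in> S. g x = k} \<noteq> 0"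
proof (rule ccontr)
  assume "\<not> ?thesis"
  then have "\<forall>k\<in>g ` S. sum f {x \<in> S. g x = k} = 0" by blast
  then have "sum f S = (\<Sum>k\<in>g ` S. 0)"
    unfolding sum.image_gen[OF assms(1), of f g] by (intro sum.cong) auto
  then have "sum f S = 0" by simp
  with assms show False by simp
qed

lemma stepZ:
  fixes Fa :: "history \<times> basis \<times> (nat \<Rightarrow> bool) \<Rightarrow> complex"
  assumes fin: "finite (hsu h')" and sub: "hsu h \<subseteq> hsu h'"
  and hyp: "\<And>v'. v' \<in> assignments (hsu h') \<Longrightarrow>
      A h' v' = A h (rs (hsu h) v') * Fa (key h v')
    \<and> H h' v' = Gh (key h v') \<and> B h' v' = Gb (key h v')
    \<and> prefix (H h (rs (hsu h) v')) (H h' v')"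
  shows "Z h h'"
  unfolding Z_def
proof (intro allI impI)
  fix \<eta>' assume "xi h' \<eta>' \<noteq> (\<lambda>_. 0)"
  then obtain b' where nz: "xi h' \<eta>' b' \<noteq> 0" by auto
  define S' where "S' = {v \<in> assignments (hsu h'). H h' v = \<eta>' \<and> B h' v = b'}"
  have finS': "finite S'" unfolding S'_def using finite_assignments[OF fin] by simp
  have "sum (A h') S' \<noteq> 0" using nz by (simp add: xi_alt S'_def)
  from sum_nz_group[OF finS' this, of "key h"]
  obtain k where k: "k \<in> key h ` S'" and nzk: "sum (A h') {v \<in> S'. key h v = k} \<noteq> 0" by blast
  from k obtain v0 where v0: "v0 \<in> S'" and kv0: "k = key h v0" by blast
  obtain \<eta> b w where kk: "k = (\<eta>, b, w)" by (cases k) auto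
  have w: "w = ws (hsu h) v0" and eta: "\<eta> = H h (rs (hsu h) v0)" and bb: "b = B h (rs (hsu h) v0)"
    using kv0 kk by (auto simp: key_def)
  define T where "T = {v \<in> assignments (hsu h). H h v = \<eta> \<and> B h v = b}"
  have v0a: "v0 \<in> assignments (hsu h')" using v0 by (simp add: S'_def)
  have wU: "\<And>x. w x \<Longrightarrow> x \<in> hsu h' \<and> x \<notin> hsu h" using v0a w by (auto simp: ws_def assignments_def)
  have eq: "sum (A h') {v \<in> S'. key h v = k} = sum (\<lambda>v. A h v * Fa k) T"
  proof (rule sum.reindex_bij_witness[where i = "\<lambda>v x. v x \<or> w x" and j = "rs (hsu h)"])
    fix a assume a: "a \<in> {v \<in> S'. key h v = k}"
    then have aa: "a \<in> assignments (hsu h')" and ka: "key h a = k" by (auto simp: S'_def)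
    have wa: "w = ws (hsu h) a" using ka kk by (auto simp: key_def)
    show "(\<lambda>x. rs (hsu h) a x \<or> w x) = a"
      using wa by (auto simp: rs_def ws_def)
    show "rs (hsu h) a \<in> T"
      using ka kk by (auto simp: T_def key_def rs_def assignments_def)
    show "A h (rs (hsu h) a) * Fa k = A h' a" using hyp[OF aa] ka by simp
  next
    fix v assume v: "v \<in> T"
    then have va: "v \<in> assignments (hsu h)" and hv: "H h v = \<eta>" and bv: "B h v = b" by (auto simp: T_def)
    have r: "rs (hsu h) (\<lambda>x. v x \<or> w x) = v"
      using va wU by (auto simp: rs_def assignments_def)
    show "rs (hsu h) (\<lambda>x. v x \<or> w x) = v" by (rule r)
    have wv: "ws (hsu h) (\<lambda>x. v x \<or> w x) = w"
      using va wU by (auto simp: ws_def assignments_def)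
    have ia: "(\<lambda>x. v x \<or> w x) \<in> assignments (hsu h')"
      using va wU sub by (auto simp: assignments_def)
    have kv: "key h (\<lambda>x. v x \<or> w x) = k" using r wv hv bv kk by (simp add: key_def)
    have "H h' (\<lambda>x. v x \<or> w x) = H h' v0" "B h' (\<lambda>x. v x \<or> w x) = B h' v0"
      using hyp[OF ia] hyp[OF v0a] kv kv0 by auto
    then show "(\<lambda>x. v x \<or> w x) \<in> {v \<in> S'. key h v = k}"
      using ia kv v0 by (auto simp: S'_def)
  qed
  then have "Fa k * xi h \<eta> b \<noteq> 0" using nzk
    by (simp add: xi_alt T_def sum_distrib_left mult.commute)
  then have "xi h \<eta> \<noteq> (\<lambda>_. 0)" by auto
  moreover have "prefix \<eta> \<eta>'" using hyp[OF v0a] eta v0 unfolding S'_def by auto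
  ultimately show "\<exists>\<eta>. prefix \<eta> \<eta>' \<and> xi h \<eta> \<noteq> (\<lambda>_. 0)" by blast
qed



lemma branchZ:
  fixes A' :: "(nat \<Rightarrow> bool) \<Rightarrow> complex" and Hp :: "(nat \<Rightarrow> bool) \<Rightarrow> history"
    and Bp :: "(nat \<Rightarrow> bool) \<Rightarrow> basis"
  assumes finU: "finite U" and Ueq: "U = hsu h1 \<union> E \<union> {yf}"
    and dis: "E \<inter> hsu h1 = {}" "yf \<notin> hsu h1" "yf \<notin> E"
    and z: "\<And>v. v \<in> assignments U \<Longrightarrow> v yf = c \<Longrightarrow> \<not> (\<forall>y\<in>E. v y) \<Longrightarrow> A' v = 0"
    and nz: "\<And>v. v \<in> assignments U \<Longrightarrow> v yf = c \<Longrightarrow> (\<forall>y\<in>E. v y) \<Longrightarrow>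
        A' v = A h1 (rs (hsu h1) v) \<and> Hp v = F (H h1 (rs (hsu h1) v)) \<and> Bp v = G (B h1 (rs (hsu h1) v))"
    and snz: "sum A' {v \<in> assignments U. v yf = c \<and> Hp v = \<eta> \<and> Bp v = b} \<noteq> 0"
  shows "\<exists>\<eta>1. xi h1 \<eta>1 \<noteq> (\<lambda>_. 0) \<and> F \<eta>1 = \<eta>"
proof -
  define S where "S = {v \<in> assignments U. v yf = c \<and> Hp v = \<eta> \<and> Bp v = b}"
  define S' where "S' = {v \<in> S. \<forall>y\<in>E. v y}"
  define T where "T = {v \<in> assignments (hsu h1). F (H h1 v) = \<eta> \<and> G (B h1 v) = b}"
  have finS: "finite S" unfolding S_def using finite_assignments[OF finU] by simp
  have fin1: "finite (hsu h1)" using finU Ueq by simp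
  have "sum A' S = sum A' S'"
    by (rule sum.mono_neutral_right[OF finS]) (auto simp: S'_def S_def, (metis (full_types) z)+)
  also have "\<dots> = sum (A h1) T"
  proof (rule sum.reindex_bij_witness[where i = "\<lambda>v x. v x \<or> x \<in> E \<or> (c \<and> x = yf)" and j = "rs (hsu h1)"])
    fix a assume a: "a \<in> S'"
    then have aa: "a \<in> assignments U" "a yf = c" "\<forall>y\<in>E. a y" "Hp a = \<eta>" "Bp a = b"
      by (auto simp: S'_def S_def)
    show "(\<lambda>x. rs (hsu h1) a x \<or> x \<in> E \<or> (c \<and> x = yf)) = a"
    proof
      fix x show "(rs (hsu h1) a x \<or> x \<in> E \<or> (c \<and> x = yf)) = a x"
        using aa dis Ueq by (cases "x \<in> U") (auto simp: rs_def assignments_def)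
    qed
    show "rs (hsu h1) a \<in> T" using aa nz[OF aa(1,2,3)] by (auto simp: T_def rs_def assignments_def)
    show "A h1 (rs (hsu h1) a) = A' a" using nz[OF aa(1,2,3)] by simp
  next
    fix v assume v: "v \<in> T"
    then have va: "v \<in> assignments (hsu h1)" "F (H h1 v) = \<eta>" "G (B h1 v) = b" by (auto simp: T_def)
    let ?i = "\<lambda>x. v x \<or> x \<in> E \<or> (c \<and> x = yf)"
    have r: "rs (hsu h1) ?i = v" using va dis by (auto simp: rs_def assignments_def)
    then show "rs (hsu h1) ?i = v" .
    have ia: "?i \<in> assignments U" "?i yf = c" "\<forall>y\<in>E. ?i y"
      using va dis Ueq by (auto simp: assignments_def)
    show "?i \<in> S'" using nz[OF ia] r va ia by (auto simp: S'_def S_def)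
  qed
  finally have "sum (A h1) T \<noteq> 0" using snz by (simp add: S_def)
  moreover have finT: "finite T" using finite_assignments[OF fin1] unfolding T_def by auto
  ultimately obtain k where k: "k \<in> (\<lambda>v. (H h1 v, B h1 v)) ` T"
    and nzk: "sum (A h1) {v \<in> T. (H h1 v, B h1 v) = k} \<noteq> 0"
    using sum_nz_group[OF finT, of "A h1" "\<lambda>v. (H h1 v, B h1 v)"] by blast
  from k obtain v0 where v0: "v0 \<in> T" "k = (H h1 v0, B h1 v0)" by blast
  have "{v \<in> T. (H h1 v, B h1 v) = k} = {v \<in> assignments (hsu h1). H h1 v = H h1 v0 \<and> B h1 v = B h1 v0}"
    using v0 by (auto simp: T_def)
  then have "xi h1 (H h1 v0) (B h1 v0) \<noteq> 0" using nzk by (simp add: xi_alt)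
  then have "xi h1 (H h1 v0) \<noteq> (\<lambda>_. 0)" by (metis)
  then show ?thesis using v0 by (auto simp: T_def)
qed



lemma beval_agree: "(\<forall>x\<in>bvars e. v x = u x) \<Longrightarrow> beval v e = beval u e"
  by (induct e) auto
lemma peval_agree: "(\<forall>x\<in>pvars e. v x = u x) \<Longrightarrow> peval v e = peval u e"
  by (induct e) (simp_all, metis beval_agree)
lemma seval_agree: "(\<forall>x\<in>svars e. v x = u x) \<Longrightarrow> seval v e = seval u e"
  by (induct e) (simp_all, metis beval_agree)
lemma instMap_agree: "(\<forall>e\<in>ran m. \<forall>x\<in>bvars e. v x = u x) \<Longrightarrow> instMap v m = instMap u m"
  unfolding instMap_def
proof
  fix k assume a: "\<forall>e\<in>ran m. \<forall>x\<in>bvars e. v x = u x"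
  show "map_option (beval v) (m k) = map_option (beval u) (m k)"
    using a by (cases "m k") (simp_all, metis beval_agree ranI)
qed

lemma A_rs: "wf_hps h \<Longrightarrow> A h (rs (hsu h) v) = A h v"
  unfolding A_def wf_hps_def
  by (subst seval_agree[of _ _ v], force simp: rs_def, subst peval_agree[of _ _ v], force simp: rs_def) simp
lemma H_rs: "wf_hps h \<Longrightarrow> H h (rs (hsu h) v) = H h v"
  unfolding H_def wf_hps_def
  by (intro map_cong refl instMap_agree) (force simp: rs_def)
lemma B_rs: "wf_hps h \<Longrightarrow> B h (rs (hsu h) v) = B h v"
  unfolding B_def wf_hps_def
  by (intro instMap_agree) (force simp: rs_def)

lemma stepZ':
  fixes Fa :: "history \<times> basis \<times> (nat \<Rightarrow> bool) \<Rightarrow> complex"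
  assumes wf: "wf_hps h" and fin: "finite (hsu h')" and sub: "hsu h \<subseteq> hsu h'"
  and hyp: "\<And>v'. v' \<in> assignments (hsu h') \<Longrightarrow>
      A h' v' = A h v' * Fa (H h v', B h v', ws (hsu h) v')
    \<and> H h' v' = Gh (H h v', B h v', ws (hsu h) v') \<and> B h' v' = Gb (H h v', B h v', ws (hsu h) v')
    \<and> prefix (H h v') (H h' v')"
  shows "Z h h'"
proof (rule stepZ[OF fin sub, of Fa Gh Gb])
  fix v' assume a: "v' \<in> assignments (hsu h')"
  show "A h' v' = A h (rs (hsu h) v') * Fa (key h v') \<and>
        H h' v' = Gh (key h v') \<and> B h' v' = Gb (key h v') \<and> prefix (H h (rs (hsu h) v')) (H h' v')"
    unfolding key_def A_rs[OF wf] H_rs[OF wf] B_rs[OF wf] using hyp[OF a] by blast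
qed

definition ob :: "bool option \<Rightarrow> bool" where
  "ob ov = (case ov of None \<Rightarrow> False | Some x \<Rightarrow> x)"
definition topH :: "history \<Rightarrow> (nat \<rightharpoonup> bool)" where
  "topH \<eta> = (if \<eta> = [] then Map.empty else last \<eta>)"

primrec cevalH :: "history \<Rightarrow> basis \<Rightarrow> cond \<Rightarrow> bool" where
  "cevalH \<eta> b (CConst x) = x"
| "cevalH \<eta> b (CCl c) = ob (topH \<eta> c)"
| "cevalH \<eta> b (CQu q) = ob (b q)"
| "cevalH \<eta> b (CNot a) = (\<not> cevalH \<eta> b a)"
| "cevalH \<eta> b (CAnd a a') = (cevalH \<eta> b a \<and> cevalH \<eta> b a')"
| "cevalH \<eta> b (CXor a a') = (cevalH \<eta> b a \<noteq> cevalH \<eta> b a')"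

lemma instMap_upd: "instMap v (m(k \<mapsto> e)) = (instMap v m)(k \<mapsto> beval v e)"
  by (auto simp: instMap_def)
lemma instMap_empty: "instMap v Map.empty = Map.empty"
  by (auto simp: instMap_def)
lemma instMap_top: "instMap v (top s) = topH (map (instMap v) s)"
  by (auto simp: top_def topH_def instMap_empty last_map)
lemma beval_dflt: "beval v (dflt m k) = ob (instMap v m k)"
  by (cases "m k") (auto simp: dflt_def ob_def instMap_def)
lemma beval_qval: "beval v (qval h q) = ob (B h v q)"
  by (simp add: qval_def B_def beval_dflt)
lemma beval_cval: "beval v (cval h c) = ob (topH (H h v) c)"
  by (simp add: cval_def H_def beval_dflt instMap_top)
lemma beval_ceval: "beval v (ceval h c) = cevalH (H h v) (B h v) c"
  by (induct c) (auto simp: beval_qval beval_cval)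
lemma beval_fpoly: "beval v (fpoly f e) = f (beval v e)"
  by (cases "beval v e") (auto simp: fpoly_def)

definition D :: "hps \<Rightarrow> hps \<Rightarrow> bool" where
  "D h h' \<longleftrightarrow> length (hoCl h) \<le> length (hoCl h')
     \<and> map dom (take (length (hoCl h)) (hoCl h')) = map dom (hoCl h)"

lemma D_trans: "D h1 h2 \<Longrightarrow> D h2 h3 \<Longrightarrow> D h1 h3"
proof -
  assume d1: "D h1 h2" and d2: "D h2 h3"
  define n1 where "n1 = length (hoCl h1)"
  define n2 where "n2 = length (hoCl h2)"
  have a: "n1 \<le> n2" "n2 \<le> length (hoCl h3)" "map dom (take n1 (hoCl h2)) = map dom (hoCl h1)"
    "map dom (take n2 (hoCl h3)) = map dom (hoCl h2)"
    using d1 d2 by (auto simp: D_def n1_def n2_def)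
  have "map dom (take n1 (hoCl h3)) = map dom (take n1 (take n2 (hoCl h3)))"
    using a by (simp add: min_def)
  also have "\<dots> = take n1 (map dom (take n2 (hoCl h3)))" by (simp add: take_map)
  also have "\<dots> = take n1 (map dom (hoCl h2))" using a by simp
  also have "\<dots> = map dom (hoCl h1)" using a by (simp add: take_map)
  finally show ?thesis using a unfolding D_def n1_def n2_def by simp
qed

lemma D_same: "hoCl h' = hoCl h \<Longrightarrow> D h h'" by (simp add: D_def)
lemma D_app: "hoCl h' = hoCl h @ xs \<Longrightarrow> D h h'" by (simp add: D_def)

lemma bvars_dflt: "\<forall>e\<in>ran m. bvars e \<subseteq> S \<Longrightarrow> bvars (dflt m k) \<subseteq> S"
  by (cases "m k") (auto simp: dflt_def ranI)
lemma top_in: "top s = Map.empty \<or> top s \<in> set s"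
  by (simp add: top_def)
lemma bvars_qval: "wf_hps h \<Longrightarrow> bvars (qval h q) \<subseteq> hsu h"
  unfolding qval_def wf_hps_def by (intro bvars_dflt) auto
lemma bvars_cval: "wf_hps h \<Longrightarrow> bvars (cval h c) \<subseteq> hsu h"
proof -
  assume wf: "wf_hps h"
  have "\<forall>e\<in>ran (top (hoCl h)). bvars e \<subseteq> hsu h"
  proof (cases "top (hoCl h) = Map.empty")
    case False
    then have "top (hoCl h) \<in> set (hoCl h)" using top_in by metis
    then show ?thesis using wf unfolding wf_hps_def by blast
  qed simp
  then show ?thesis unfolding cval_def by (rule bvars_dflt)
qed
lemma bvars_ceval: "wf_hps h \<Longrightarrow> bvars (ceval h c) \<subseteq> hsu h"
  by (induct c) (auto dest: bvars_qval[of _ ] bvars_cval)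

lemma ran_upd_sub: "ran (m(k \<mapsto> e)) \<subseteq> insert e (ran m)"
  by (auto simp: ran_def)

lemma fresh_notin: "finite X \<Longrightarrow> fresh X \<notin> X"
  unfolding fresh_def by (metis LeastI_ex ex_new_if_finite infinite_UNIV_nat)



lemma cis_add2: "cis (2 * pi * (a + b)) = cis (2 * pi * a) * cis (2 * pi * b)"
  by (simp add: cis_mult distrib_left)

lemma ran_upd_vars: "\<forall>e\<in>ran m. bvars e \<subseteq> S \<Longrightarrow> bvars e' \<subseteq> S \<Longrightarrow> \<forall>e\<in>ran (m(k \<mapsto> e')). bvars e \<subseteq> S"
proof
  fix e assume a: "\<forall>e\<in>ran m. bvars e \<subseteq> S" "bvars e' \<subseteq> S" and e: "e \<in> ran (m(k \<mapsto> e'))"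
  have "e \<in> insert e' (ran m)" using ran_upd_sub e by (rule subsetD)
  then show "bvars e \<subseteq> S" using a by (cases "e = e'") auto
qed

lemma wf_init: "wf_hps h \<Longrightarrow> wf_hps (sem (Init q) h)"
proof -
  assume wf: "wf_hps h"
  have "\<forall>e\<in>ran ((hoQu h)(q \<mapsto> BConst False)). bvars e \<subseteq> hsu h"
    by (rule ran_upd_vars) (use wf in \<open>auto simp: wf_hps_def\<close>)
  then show ?thesis using wf by (simp add: wf_hps_def)
qed

lemma Z_init: "wf_hps h \<Longrightarrow> Z h (sem (Init q) h)"
  by (rule stepZ'[where Fa="\<lambda>_. 1" and Gh = "\<lambda>(\<eta>,b,w). \<eta>" and Gb = "\<lambda>(\<eta>,b,w). b(q \<mapsto> False)"])
     (auto simp: wf_hps_def A_def H_def B_def instMap_upd)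

lemma wf_X: "wf_hps h \<Longrightarrow> wf_hps (sem (Apply GX q) h)"
proof -
  assume wf: "wf_hps h"
  have "\<forall>e\<in>ran ((hoQu h)(q \<mapsto> BXor (BConst True) (qval h q))). bvars e \<subseteq> hsu h"
    by (rule ran_upd_vars) (use wf bvars_qval[OF wf, of q] in \<open>auto simp: wf_hps_def\<close>)
  then show ?thesis using wf by (simp add: wf_hps_def)
qed

lemma Z_X: "wf_hps h \<Longrightarrow> Z h (sem (Apply GX q) h)"
  by (rule stepZ'[where Fa="\<lambda>_. 1" and Gh = "\<lambda>(\<eta>,b,w). \<eta>" and Gb = "\<lambda>(\<eta>,b,w). b(q \<mapsto> \<not> ob (b q))"])
     (auto simp: wf_hps_def A_def H_def B_def instMap_upd beval_qval)

lemma wf_Zk: "wf_hps h \<Longrightarrow> wf_hps (sem (Apply (GZ k) q) h)"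
  unfolding wf_hps_def using bvars_qval[of h q] by (simp add: wf_hps_def)

lemma Z_Zk: "wf_hps h \<Longrightarrow> Z h (sem (Apply (GZ k) q) h)"
  by (rule stepZ'[where Fa="\<lambda>(\<eta>,b,w). cis (2 * pi * (1 / 2 ^ k * of_bool (ob (b q))))"
        and Gh = "\<lambda>(\<eta>,b,w). \<eta>" and Gb = "\<lambda>(\<eta>,b,w). b"])
     (auto simp: wf_hps_def A_def H_def B_def beval_qval cis_add2)

lemma wf_H: "wf_hps h \<Longrightarrow> wf_hps (sem (Apply GH q) h)"
  unfolding wf_hps_def using bvars_qval[of h q]
  by (simp add: Let_def wf_hps_def, intro conjI ran_upd_vars; fastforce)

lemma Z_H: assumes wf: "wf_hps h" shows "Z h (sem (Apply GH q) h)"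
proof -
  define y where "y = fresh (hsu h)"
  have fin: "finite (hsu h)" using wf by (simp add: wf_hps_def)
  have yn: "y \<notin> hsu h" unfolding y_def by (rule fresh_notin[OF fin])
  show ?thesis
  proof (rule stepZ'[OF wf, where Fa="\<lambda>(\<eta>,b,w). complex_of_real (1 / sqrt 2) * cis (2 * pi * (1 / 2 * (of_bool (w y) * of_bool (ob (b q)))))"
        and Gh = "\<lambda>(\<eta>,b,w). \<eta>" and Gb = "\<lambda>(\<eta>,b,w). b(q \<mapsto> w y)"])
    show "finite (hsu (sem (Apply GH q) h))" using fin by (simp add: Let_def)
    show "hsu h \<subseteq> hsu (sem (Apply GH q) h)" by (auto simp: Let_def)
    fix v' assume "v' \<in> assignments (hsu (sem (Apply GH q) h))"
    have wy: "ws (hsu h) v' y = v' y" using yn by (simp add: ws_def)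
    show "A (sem (Apply GH q) h) v' =
          A h v' * (\<lambda>(\<eta>,b,w). complex_of_real (1 / sqrt 2) * cis (2 * pi * (1 / 2 * (of_bool (w y) * of_bool (ob (b q)))))) (H h v', B h v', ws (hsu h) v') \<and>
          H (sem (Apply GH q) h) v' = (\<lambda>(\<eta>,b,w). \<eta>) (H h v', B h v', ws (hsu h) v') \<and>
          B (sem (Apply GH q) h) v' = (\<lambda>(\<eta>,b,w). b(q \<mapsto> w y)) (H h v', B h v', ws (hsu h) v') \<and>
          prefix (H h v') (H (sem (Apply GH q) h) v')"
      using wy by (simp add: Let_def A_def H_def B_def instMap_upd beval_qval cis_add2 y_def[symmetric])
  qed
qed

lemma wf_meas: "wf_hps h \<Longrightarrow> wf_hps (sem (Measure q c) h)"
proof -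
  assume wf: "wf_hps h"
  have t: "finite (dom (top (hoCl h))) \<and> (\<forall>e\<in>ran (top (hoCl h)). bvars e \<subseteq> hsu h)"
  proof (cases "top (hoCl h) = Map.empty")
    case False
    then have "top (hoCl h) \<in> set (hoCl h)" using top_in by metis
    then show ?thesis using wf unfolding wf_hps_def by blast
  qed simp
  have r: "\<forall>e\<in>ran ((top (hoCl h))(c \<mapsto> qval h q)). bvars e \<subseteq> hsu h"
    by (rule ran_upd_vars) (use t bvars_qval[OF wf, of q] in auto)
  have f: "finite (dom ((top (hoCl h))(c \<mapsto> qval h q)))" using t by simp
  show ?thesis using wf r f unfolding wf_hps_def by simp
qed

lemma wf_assign: "wf_hps h \<Longrightarrow> wf_hps (sem (Assign c1 f c2) h)"
proof -
  assume wf: "wf_hps h"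
  have t: "finite (dom (top (hoCl h))) \<and> (\<forall>e\<in>ran (top (hoCl h)). bvars e \<subseteq> hsu h)"
  proof (cases "top (hoCl h) = Map.empty")
    case False
    then have "top (hoCl h) \<in> set (hoCl h)" using top_in by metis
    then show ?thesis using wf unfolding wf_hps_def by blast
  qed simp
  have "bvars (fpoly f (cval h c2)) \<subseteq> hsu h" using bvars_cval[OF wf, of c2] by (simp add: fpoly_def)
  then have r: "\<forall>e\<in>ran ((top (hoCl h))(c1 \<mapsto> fpoly f (cval h c2))). bvars e \<subseteq> hsu h"
    by (intro ran_upd_vars) (use t in auto)
  have f: "finite (dom ((top (hoCl h))(c1 \<mapsto> fpoly f (cval h c2))))" using t by simp
  show ?thesis using wf r f unfolding wf_hps_def by simp
qed

lemma Z_meas: "wf_hps h \<Longrightarrow> Z h (sem (Measure q c) h)"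
  by (rule stepZ'[where Fa="\<lambda>_. 1" and Gh = "\<lambda>(\<eta>,b,w). \<eta> @ [(topH \<eta>)(c \<mapsto> ob (b q))]" and Gb = "\<lambda>(\<eta>,b,w). b"])
     (auto simp: wf_hps_def A_def H_def B_def instMap_upd beval_qval instMap_top)

lemma Z_assign: "wf_hps h \<Longrightarrow> Z h (sem (Assign c1 f c2) h)"
  by (rule stepZ'[where Fa="\<lambda>_. 1" and Gh = "\<lambda>(\<eta>,b,w). \<eta> @ [(topH \<eta>)(c1 \<mapsto> f (ob (topH \<eta> c2)))]" and Gb = "\<lambda>(\<eta>,b,w). b"])
     (auto simp: wf_hps_def A_def H_def B_def instMap_upd beval_cval beval_fpoly instMap_top)

lemma wf_scale: "wf_hps h \<Longrightarrow> svars e \<subseteq> hsu h \<Longrightarrow> wf_hps (scale e h)"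
  by (simp add: wf_hps_def scale_def)

lemma Z_scale: "wf_hps h \<Longrightarrow> (\<And>v. seval v e = g (H h v) (B h v)) \<Longrightarrow> Z h (scale e h)"
  by (rule stepZ'[where Fa="\<lambda>(\<eta>,b,w). complex_of_real (g \<eta> b)" and Gh = "\<lambda>(\<eta>,b,w). \<eta>" and Gb = "\<lambda>(\<eta>,b,w). b"])
     (auto simp: wf_hps_def A_def H_def B_def scale_def)



definition R :: "(nat \<rightharpoonup> bool) \<Rightarrow> nat set \<Rightarrow> (nat \<rightharpoonup> bool)" where
  "R e Dm = (\<lambda>k. if k \<in> dom e \<union> Dm then Some (ob (e k)) else None)"
definition padH :: "nat \<Rightarrow> history \<Rightarrow> history" where
  "padH N \<eta> = \<eta> @ replicate (N - length \<eta>) (topH \<eta>)"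
definition relab :: "nat \<Rightarrow> (nat \<rightharpoonup> bexp) list \<Rightarrow> history \<Rightarrow> history" where
  "relab N s \<eta> = map2 R (padH N \<eta>) (map dom (pad N s))"

lemma dom_instMap: "dom (instMap v m) = dom m"
  by (auto simp: instMap_def)

lemma instMap_mux0: "\<not> v y \<Longrightarrow> instMap v (mux_map y m1 m2) = R (instMap v m1) (dom m2)"
  by (rule ext) (auto simp: instMap_def mux_map_def R_def muxb_def beval_dflt dom_instMap[unfolded instMap_def])
lemma instMap_mux1: "v y \<Longrightarrow> instMap v (mux_map y m1 m2) = R (instMap v m2) (dom m1)"
  by (rule ext) (auto simp: instMap_def mux_map_def R_def muxb_def beval_dflt dom_instMap[unfolded instMap_def])

lemma map_mux0: "\<not> v y \<Longrightarrow> map (instMap v) (map2 (mux_map y) xs ys) = map2 R (map (instMap v) xs) (map dom ys)"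
proof (induct xs arbitrary: ys)
  case (Cons a xs) then show ?case by (cases ys) (auto simp: instMap_mux0)
qed simp
lemma map_mux1: "v y \<Longrightarrow> map (instMap v) (map2 (mux_map y) xs ys) = map2 R (map (instMap v) ys) (map dom xs)"
proof (induct xs arbitrary: ys)
  case (Cons a xs) then show ?case by (cases ys) (auto simp: instMap_mux1)
qed simp

lemma map_pad: "map (instMap v) (pad N s) = padH N (map (instMap v) s)"
  by (simp add: pad_def padH_def instMap_top)

lemma seval_foldr: "seval v (foldr (\<lambda>y e. SMul (SBool (BVar y)) e) xs (SConst 1)) = of_bool (\<forall>y\<in>set xs. v y)"
  by (induct xs) auto
lemma svars_foldr: "svars (foldr (\<lambda>y e. SMul (SBool (BVar y)) e) xs (SConst 1)) = set xs"
  by (induct xs) auto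
lemma seval_varprod: "finite E \<Longrightarrow> seval v (varprod E) = of_bool (\<forall>y\<in>E. v y)"
  by (simp add: varprod_def seval_foldr)
lemma svars_varprod: "svars (varprod E) \<subseteq> E"
  by (cases "finite E") (auto simp: varprod_def svars_foldr)

lemma R_self: "R e (dom e) = e"
proof
  fix k show "R e (dom e) k = e k" by (cases "e k") (auto simp: R_def ob_def)
qed

lemma dom_mux: "dom (mux_map y m1 m2) = dom m1 \<union> dom m2"
  by (auto simp: mux_map_def split: if_splits)

lemma length_pad: "length s \<le> N \<Longrightarrow> length (pad N s) = N"
  by (simp add: pad_def)
lemma nth_pad: "i < length s \<Longrightarrow> pad N s ! i = s ! i"
  by (simp add: pad_def nth_append)

lemma take_relab:
  assumes "length \<eta> \<le> N" "length s \<le> N" "n \<le> length \<eta>" "n \<le> length s"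
    "\<forall>i<n. dom (\<eta> ! i) = dom (s ! i)"
  shows "take n (relab N s \<eta>) = take n \<eta>"
proof (rule nth_equalityI)
  show "length (take n (relab N s \<eta>)) = length (take n \<eta>)"
    using assms by (simp add: relab_def padH_def length_pad)
  fix i assume "i < length (take n (relab N s \<eta>))"
  then have i: "i < n" using assms by (simp add: relab_def padH_def length_pad)
  have "relab N s \<eta> ! i = R (\<eta> ! i) (dom (s ! i))"
    using assms i by (simp add: relab_def padH_def length_pad nth_append nth_pad)
  also have "\<dots> = \<eta> ! i" using assms i R_self by metis
  finally show "take n (relab N s \<eta>) ! i = take n \<eta> ! i" using i by simp
qed

lemma mux_vars: "\<forall>e\<in>ran m1. bvars e \<subseteq> S \<Longrightarrow> \<forall>e\<in>ran m2. bvars e \<subseteq> S \<Longrightarrow> y \<in> S \<Longrightarrow>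
  \<forall>e\<in>ran (mux_map y m1 m2). bvars e \<subseteq> S"
  using bvars_dflt[of m1 S] bvars_dflt[of m2 S]
  by (auto simp: ran_def mux_map_def muxb_def split: if_splits) blast+

lemma pad_set: "m \<in> set (pad N s) \<Longrightarrow> m \<in> set s \<or> m = Map.empty"
  using top_in[of s] by (auto simp: pad_def)



lemma entry_ok:
  assumes "wf_hps h" "m \<in> set (pad N (hoCl h))" "hsu h \<subseteq> S"
  shows "finite (dom m) \<and> (\<forall>e\<in>ran m. bvars e \<subseteq> S)"
proof (cases "m = Map.empty")
  case False
  then have "m \<in> set (hoCl h)" using pad_set[OF assms(2)] by blast
  then show ?thesis using assms(1,3) unfolding wf_hps_def by blast
qed simp

lemma wf_boxplus:
  assumes wf1: "wf_hps h1" and wf2: "wf_hps h2"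
  shows "wf_hps (boxplus h1 h2)"
proof -
  define yf where "yf = fresh (hsu h1 \<union> hsu h2)"
  define U where "U = hsu h1 \<union> hsu h2 \<union> {yf}"
  define N where "N = max (length (hoCl h1)) (length (hoCl h2))"
  have hb: "hsu (boxplus h1 h2) = U" "hoQu (boxplus h1 h2) = mux_map yf (hoQu h1) (hoQu h2)"
    "hoCl (boxplus h1 h2) = map2 (mux_map yf) (pad N (hoCl h1)) (pad N (hoCl h2))"
    "hP (boxplus h1 h2) = PAdd (hP h1) (PMul (PVar yf) (PAdd (hP h2) (PMul (PConst (-1) 0) (hP h1))))"
    "hs (boxplus h1 h2) = SAdd (SMul (SBool (BXor (BConst True) (BVar yf))) (SMul (hs h1) (varprod (hsu h2 - hsu h1))))
                 (SMul (SBool (BVar yf)) (SMul (hs h2) (varprod (hsu h1 - hsu h2))))"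
    by (simp_all add: boxplus_def Let_def yf_def U_def mux_stack_def N_def)
  have s1: "hsu h1 \<subseteq> U" and s2: "hsu h2 \<subseteq> U" and y: "yf \<in> U" by (auto simp: U_def)
  have "finite U" using wf1 wf2 by (simp add: U_def wf_hps_def)
  moreover have "finite (dom (hoQu (boxplus h1 h2)))" using wf1 wf2 by (simp add: hb dom_mux wf_hps_def)
  moreover have "pvars (hP (boxplus h1 h2)) \<subseteq> U" using wf1 wf2 s1 s2 y by (auto simp: hb wf_hps_def)
  moreover have "svars (hs (boxplus h1 h2)) \<subseteq> U" using wf1 wf2 s1 s2 y
      svars_varprod[of "hsu h2 - hsu h1"] svars_varprod[of "hsu h1 - hsu h2"]
    by (auto simp: hb wf_hps_def)
  moreover have "\<forall>e\<in>ran (hoQu (boxplus h1 h2)). bvars e \<subseteq> U"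
  proof -
    have q1: "\<forall>e\<in>ran (hoQu h1). bvars e \<subseteq> U" using wf1 s1 unfolding wf_hps_def by blast
    have q2: "\<forall>e\<in>ran (hoQu h2). bvars e \<subseteq> U" using wf2 s2 unfolding wf_hps_def by blast
    show ?thesis unfolding hb by (rule mux_vars[OF q1 q2 y])
  qed
  moreover have "\<forall>m\<in>set (hoCl (boxplus h1 h2)). finite (dom m) \<and> (\<forall>e\<in>ran m. bvars e \<subseteq> U)"
  proof
    fix m assume "m \<in> set (hoCl (boxplus h1 h2))"
    then obtain a b where m: "m = mux_map yf a b" "a \<in> set (pad N (hoCl h1))" "b \<in> set (pad N (hoCl h2))"
      unfolding hb by (auto dest: set_zip_leftD set_zip_rightD)
    have a: "finite (dom a) \<and> (\<forall>e\<in>ran a. bvars e \<subseteq> U)" by (rule entry_ok[OF wf1 m(2) s1])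
    have b: "finite (dom b) \<and> (\<forall>e\<in>ran b. bvars e \<subseteq> U)" by (rule entry_ok[OF wf2 m(3) s2])
    show "finite (dom m) \<and> (\<forall>e\<in>ran m. bvars e \<subseteq> U)"
      using a b y mux_vars[of a U b yf] by (simp add: m dom_mux)
  qed
  ultimately show ?thesis unfolding wf_hps_def hb by blast
qed

lemma D_boxplus:
  assumes d1: "D h h1" and d2: "D h h2"
  shows "D h (boxplus h1 h2)"
proof -
  define yf where "yf = fresh (hsu h1 \<union> hsu h2)"
  define N where "N = max (length (hoCl h1)) (length (hoCl h2))"
  define n where "n = length (hoCl h)"
  have hb: "hoCl (boxplus h1 h2) = map2 (mux_map yf) (pad N (hoCl h1)) (pad N (hoCl h2))"
    by (simp_all add: boxplus_def Let_def yf_def mux_stack_def N_def)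
  have l: "n \<le> length (hoCl h1)" "n \<le> length (hoCl h2)" using d1 d2 by (auto simp: D_def n_def)
  have m1: "map dom (take n (hoCl h1)) = map dom (hoCl h)" and m2: "map dom (take n (hoCl h2)) = map dom (hoCl h)"
    using d1 d2 by (auto simp: D_def n_def)
  have dd: "dom (hoCl h1 ! i) = dom (hoCl h ! i) \<and> dom (hoCl h2 ! i) = dom (hoCl h ! i)" if i: "i < n" for i
  proof -
    have "map dom (take n (hoCl h1)) ! i = map dom (hoCl h) ! i" "map dom (take n (hoCl h2)) ! i = map dom (hoCl h) ! i"
      using m1 m2 by simp_all
    then show ?thesis using i l by (simp add: n_def)
  qed
  have len: "length (hoCl (boxplus h1 h2)) = N" by (simp add: hb N_def length_pad)
  have "map dom (take n (hoCl (boxplus h1 h2))) = map dom (hoCl h)"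
  proof (rule nth_equalityI)
    show "length (map dom (take n (hoCl (boxplus h1 h2)))) = length (map dom (hoCl h))"
      using len l by (simp add: n_def N_def)
    fix i assume "i < length (map dom (take n (hoCl (boxplus h1 h2))))"
    then have i: "i < n" using len l by (simp add: N_def)
    have "i < length (hoCl h1)" "i < length (hoCl h2)" "i < N" using i l by (auto simp: N_def)
    then show "map dom (take n (hoCl (boxplus h1 h2))) ! i = map dom (hoCl h) ! i"
      using i dd[OF i] l by (simp add: hb nth_pad dom_mux length_pad N_def n_def)
  qed
  then show ?thesis using len l by (simp add: D_def n_def N_def)
qed



lemma boxplus_split:
  assumes wf1: "wf_hps h1" and wf2: "wf_hps h2" and nzx: "xi (boxplus h1 h2) \<eta> \<noteq> (\<lambda>_. 0)"
  shows "(\<exists>\<eta>1. xi h1 \<eta>1 \<noteq> (\<lambda>_. 0) \<and> relab (max (length (hoCl h1)) (length (hoCl h2))) (hoCl h2) \<eta>1 = \<eta>)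
       \<or> (\<exists>\<eta>2. xi h2 \<eta>2 \<noteq> (\<lambda>_. 0) \<and> relab (max (length (hoCl h1)) (length (hoCl h2))) (hoCl h1) \<eta>2 = \<eta>)"
proof -
  define yf where "yf = fresh (hsu h1 \<union> hsu h2)"
  define U where "U = hsu h1 \<union> hsu h2 \<union> {yf}"
  define N where "N = max (length (hoCl h1)) (length (hoCl h2))"
  define hb where "hb = boxplus h1 h2"
  have fin1: "finite (hsu h1)" and fin2: "finite (hsu h2)" using wf1 wf2 by (auto simp: wf_hps_def)
  have yn: "yf \<notin> hsu h1 \<union> hsu h2" unfolding yf_def by (rule fresh_notin) (use fin1 fin2 in simp)
  have finU: "finite U" using fin1 fin2 by (simp add: U_def)
  have hb: "hsu hb = U" "hoQu hb = mux_map yf (hoQu h1) (hoQu h2)"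
    "hoCl hb = map2 (mux_map yf) (pad N (hoCl h1)) (pad N (hoCl h2))"
    "hP hb = PAdd (hP h1) (PMul (PVar yf) (PAdd (hP h2) (PMul (PConst (-1) 0) (hP h1))))"
    "hs hb = SAdd (SMul (SBool (BXor (BConst True) (BVar yf))) (SMul (hs h1) (varprod (hsu h2 - hsu h1))))
                 (SMul (SBool (BVar yf)) (SMul (hs h2) (varprod (hsu h1 - hsu h2))))"
    by (simp_all add: hb_def boxplus_def Let_def yf_def U_def mux_stack_def N_def)
  from nzx obtain b where nz: "xi hb \<eta> b \<noteq> 0" unfolding hb_def by auto
  define S0 where "S0 = {v \<in> assignments U. v yf = False \<and> H hb v = \<eta> \<and> B hb v = b}"
  define S1 where "S1 = {v \<in> assignments U. v yf = True \<and> H hb v = \<eta> \<and> B hb v = b}"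
  have su: "{v \<in> assignments (hsu hb). H hb v = \<eta> \<and> B hb v = b} = S0 \<union> S1"
    by (auto simp: S0_def S1_def hb)
  have "xi hb \<eta> b = sum (A hb) (S0 \<union> S1)"
    unfolding xi_alt su ..
  also have "\<dots> = sum (A hb) S0 + sum (A hb) S1"
    by (rule sum.union_disjoint) (use finite_assignments[OF finU] in \<open>auto simp: S0_def S1_def\<close>)
  finally have "xi hb \<eta> b = sum (A hb) S0 + sum (A hb) S1" .
  then have "sum (A hb) S0 \<noteq> 0 \<or> sum (A hb) S1 \<noteq> 0" using nz by auto
  then show ?thesis
  proof
    assume s0: "sum (A hb) S0 \<noteq> 0"
    have "\<exists>\<eta>1. xi h1 \<eta>1 \<noteq> (\<lambda>_. 0) \<and> relab N (hoCl h2) \<eta>1 = \<eta>"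
    proof (rule branchZ[of U h1 "hsu h2 - hsu h1" yf False "A hb" "H hb" "relab N (hoCl h2)" "B hb" "\<lambda>b. R b (dom (hoQu h2))" \<eta> b])
      show "finite U" by (rule finU)
      show "U = hsu h1 \<union> (hsu h2 - hsu h1) \<union> {yf}" by (auto simp: U_def)
      show "(hsu h2 - hsu h1) \<inter> hsu h1 = {}" "yf \<notin> hsu h1" "yf \<notin> hsu h2 - hsu h1" using yn by auto
      show "sum (A hb) {v \<in> assignments U. v yf = False \<and> H hb v = \<eta> \<and> B hb v = b} \<noteq> 0"
        using s0 by (simp add: S0_def)
    next
      fix v assume "v \<in> assignments U" "v yf = False" "\<not> (\<forall>y\<in>hsu h2 - hsu h1. v y)"
      then show "A hb v = 0" using fin2 by (simp add: A_def hb seval_varprod)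
    next
      fix v assume a: "v \<in> assignments U" "v yf = False" "\<forall>y\<in>hsu h2 - hsu h1. v y"
      have nv: "\<not> v yf" using a by simp
      have hh: "H hb v = relab N (hoCl h2) (H h1 v)"
        unfolding H_def hb(3) map_mux0[of v yf, OF nv] map_pad relab_def by (rule refl)
      have bq: "B hb v = R (B h1 v) (dom (hoQu h2))" unfolding B_def hb(2) instMap_mux0[of v yf, OF nv] ..
      have av: "A hb v = A h1 v" using a fin2 by (simp add: A_def hb seval_varprod)
      show "A hb v = A h1 (rs (hsu h1) v) \<and> H hb v = relab N (hoCl h2) (H h1 (rs (hsu h1) v))
           \<and> B hb v = R (B h1 (rs (hsu h1) v)) (dom (hoQu h2))"
        using hh bq av by (simp add: A_rs[OF wf1] H_rs[OF wf1] B_rs[OF wf1])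
    qed
    then show ?thesis unfolding N_def by blast
  next
    assume s1: "sum (A hb) S1 \<noteq> 0"
    have "\<exists>\<eta>2. xi h2 \<eta>2 \<noteq> (\<lambda>_. 0) \<and> relab N (hoCl h1) \<eta>2 = \<eta>"
    proof (rule branchZ[of U h2 "hsu h1 - hsu h2" yf True "A hb" "H hb" "relab N (hoCl h1)" "B hb" "\<lambda>b. R b (dom (hoQu h1))" \<eta> b])
      show "finite U" by (rule finU)
      show "U = hsu h2 \<union> (hsu h1 - hsu h2) \<union> {yf}" by (auto simp: U_def)
      show "(hsu h1 - hsu h2) \<inter> hsu h2 = {}" "yf \<notin> hsu h2" "yf \<notin> hsu h1 - hsu h2" using yn by auto
      show "sum (A hb) {v \<in> assignments U. v yf = True \<and> H hb v = \<eta> \<and> B hb v = b} \<noteq> 0"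
        using s1 by (simp add: S1_def)
    next
      fix v assume "v \<in> assignments U" "v yf = True" "\<not> (\<forall>y\<in>hsu h1 - hsu h2. v y)"
      then show "A hb v = 0" using fin1 by (simp add: A_def hb seval_varprod)
    next
      fix v assume a: "v \<in> assignments U" "v yf = True" "\<forall>y\<in>hsu h1 - hsu h2. v y"
      have nv: "v yf" using a by simp
      have hh: "H hb v = relab N (hoCl h1) (H h2 v)"
        unfolding H_def hb(3) map_mux1[of v yf, OF nv] map_pad relab_def by (rule refl)
      have bq: "B hb v = R (B h2 v) (dom (hoQu h1))" unfolding B_def hb(2) instMap_mux1[of v yf, OF nv] ..
      have av: "A hb v = A h2 v" using a fin1 by (simp add: A_def hb seval_varprod)
      show "A hb v = A h2 (rs (hsu h2) v) \<and> H hb v = relab N (hoCl h1) (H h2 (rs (hsu h2) v))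
           \<and> B hb v = R (B h2 (rs (hsu h2) v)) (dom (hoQu h1))"
        using hh bq av by (simp add: A_rs[OF wf2] H_rs[OF wf2] B_rs[OF wf2])
    qed
    then show ?thesis unfolding N_def by blast
  qed
qed



lemma supp_hist: "xi h \<eta> \<noteq> (\<lambda>_. 0) \<Longrightarrow> \<exists>v. \<eta> = H h v"
proof (rule ccontr)
  assume a: "xi h \<eta> \<noteq> (\<lambda>_. 0)" "\<not> (\<exists>v. \<eta> = H h v)"
  have "xi h \<eta> = (\<lambda>_. 0)"
  proof
    fix b have "\<forall>v. H h v \<noteq> \<eta>" using a(2) by metis
    then have e: "{v \<in> assignments (hsu h). H h v = \<eta> \<and> B h v = b} = {}" by blast
    show "xi h \<eta> b = 0" unfolding xi_alt e by simp
  qed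
  with a(1) show False by simp
qed

lemma branch_prefix:
  assumes z: "Z h h1" and d1: "D h h1" and d2: "D h h2" and nz: "xi h1 \<eta>1 \<noteq> (\<lambda>_. 0)"
    and N: "length (hoCl h1) \<le> N" "length (hoCl h2) \<le> N"
  shows "\<exists>\<eta>0. prefix \<eta>0 (relab N (hoCl h2) \<eta>1) \<and> xi h \<eta>0 \<noteq> (\<lambda>_. 0)"
proof -
  obtain \<eta>0 where p: "prefix \<eta>0 \<eta>1" and nz0: "xi h \<eta>0 \<noteq> (\<lambda>_. 0)" using z nz unfolding Z_def by blast
  obtain v0 where v0: "\<eta>0 = H h v0" using supp_hist[OF nz0] by blast
  obtain v1 where v1: "\<eta>1 = H h1 v1" using supp_hist[OF nz] by blast
  define n where "n = length (hoCl h)"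
  have ln0: "length \<eta>0 = n" using v0 by (simp add: H_def n_def)
  have ln1: "length \<eta>1 = length (hoCl h1)" using v1 by (simp add: H_def)
  have l: "n \<le> length (hoCl h1)" "n \<le> length (hoCl h2)" using d1 d2 by (auto simp: D_def n_def)
  have m1: "map dom (take n (hoCl h1)) = map dom (hoCl h)" and m2: "map dom (take n (hoCl h2)) = map dom (hoCl h)"
    using d1 d2 by (auto simp: D_def n_def)
  have dd: "dom (\<eta>1 ! i) = dom (hoCl h2 ! i)" if i: "i < n" for i
  proof -
    have "map dom (take n (hoCl h1)) ! i = map dom (hoCl h) ! i" "map dom (take n (hoCl h2)) ! i = map dom (hoCl h) ! i"
      using m1 m2 by simp_all
    then show ?thesis using i l v1 by (simp add: n_def H_def dom_instMap)
  qed
  have t: "take n (relab N (hoCl h2) \<eta>1) = take n \<eta>1"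
    by (rule take_relab) (use N l ln1 dd in auto)
  have "\<eta>0 = take n \<eta>1" using p ln0 by (auto simp: prefix_def)
  then have "\<eta>0 = take n (relab N (hoCl h2) \<eta>1)" using t by simp
  then have "prefix \<eta>0 (relab N (hoCl h2) \<eta>1)" by (simp add: take_is_prefix)
  then show ?thesis using nz0 by blast
qed

lemma Z_boxplus:
  assumes wf1: "wf_hps h1" and wf2: "wf_hps h2" and z1: "Z h h1" and z2: "Z h h2"
    and d1: "D h h1" and d2: "D h h2"
  shows "Z h (boxplus h1 h2)"
  unfolding Z_def
proof (intro allI impI)
  fix \<eta> assume "xi (boxplus h1 h2) \<eta> \<noteq> (\<lambda>_. 0)"
  from boxplus_split[OF wf1 wf2 this] show "\<exists>\<eta>0. prefix \<eta>0 \<eta> \<and> xi h \<eta>0 \<noteq> (\<lambda>_. 0)"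
  proof
    assume "\<exists>\<eta>1. xi h1 \<eta>1 \<noteq> (\<lambda>_. 0) \<and> relab (max (length (hoCl h1)) (length (hoCl h2))) (hoCl h2) \<eta>1 = \<eta>"
    then obtain \<eta>1 where a: "xi h1 \<eta>1 \<noteq> (\<lambda>_. 0)" "relab (max (length (hoCl h1)) (length (hoCl h2))) (hoCl h2) \<eta>1 = \<eta>" by blast
    from branch_prefix[OF z1 d1 d2 a(1), of "max (length (hoCl h1)) (length (hoCl h2))"] a(2)
    show ?thesis by auto
  next
    assume "\<exists>\<eta>2. xi h2 \<eta>2 \<noteq> (\<lambda>_. 0) \<and> relab (max (length (hoCl h1)) (length (hoCl h2))) (hoCl h1) \<eta>2 = \<eta>"
    then obtain \<eta>2 where a: "xi h2 \<eta>2 \<noteq> (\<lambda>_. 0)" "relab (max (length (hoCl h1)) (length (hoCl h2))) (hoCl h1) \<eta>2 = \<eta>" by blast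
    from branch_prefix[OF z2 d2 d1 a(1), of "max (length (hoCl h1)) (length (hoCl h2))"] a(2)
    show ?thesis by auto
  qed
qed

lemma Z_refl: "Z h h" unfolding Z_def by blast
lemma D_refl: "D h h" by (simp add: D_def)

lemma main_inv: "wf_hps h \<Longrightarrow> wf_hps (sem p h) \<and> Z h (sem p h) \<and> D h (sem p h)"
proof (induct p arbitrary: h)
  case Skip then show ?case by (simp add: Z_refl D_refl)
next
  case (Init q) then show ?case using wf_init Z_init D_same[of "sem (Init q) h" h] by simp
next
  case (Apply g q) then show ?case
  proof (cases g)
    case GH then show ?thesis using Apply wf_H Z_H D_same[of "sem (Apply GH q) h" h] by (simp add: Let_def)
  next
    case GX then show ?thesis using Apply wf_X Z_X D_same[of "sem (Apply GX q) h" h] by simp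
  next
    case (GZ k) then show ?thesis using Apply wf_Zk Z_Zk D_same[of "sem (Apply (GZ k) q) h" h] by simp
  qed
next
  case (Measure q c) then show ?case using wf_meas Z_meas D_app[of "sem (Measure q c) h" h] by simp
next
  case (Assign c1 f c2) then show ?case using wf_assign Z_assign D_app[of "sem (Assign c1 f c2) h" h] by simp
next
  case (Seq p1 p2)
  then show ?case using Z_trans D_trans by (metis sem.simps(6))
next
  case (For a b body)
  have "\<forall>h. wf_hps h \<longrightarrow> wf_hps (fold (\<lambda>i. sem (body i)) xs h) \<and> Z h (fold (\<lambda>i. sem (body i)) xs h)
      \<and> D h (fold (\<lambda>i. sem (body i)) xs h)" for xs
  proof (induct xs)
    case Nil then show ?case by (simp add: Z_refl D_refl)
  next
    case (Cons x xs)
    show ?case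
    proof (intro allI impI)
      fix h assume wf: "wf_hps h"
      have i: "wf_hps (sem (body x) h) \<and> Z h (sem (body x) h) \<and> D h (sem (body x) h)"
        using For(1)[of "body x" h] wf by simp
      then show "wf_hps (fold (\<lambda>i. sem (body i)) (x # xs) h) \<and> Z h (fold (\<lambda>i. sem (body i)) (x # xs) h)
      \<and> D h (fold (\<lambda>i. sem (body i)) (x # xs) h)"
        using Cons[rule_format, of "sem (body x) h"] Z_trans D_trans by auto
    qed
  qed
  then show ?case using For(2) by simp
next
  case (If c p1 p2)
  define e1 where "e1 = SBool (ceval h c)"
  define e2 where "e2 = SAdd (SConst 1) (SNeg (SBool (ceval h c)))"
  have wf: "wf_hps h" by (rule If(3))
  have sv: "svars e1 \<subseteq> hsu h" "svars e2 \<subseteq> hsu h" using bvars_ceval[OF wf, of c] by (auto simp: e1_def e2_def)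
  have ws1: "wf_hps (scale e1 h)" and ws2: "wf_hps (scale e2 h)" using wf_scale[OF wf] sv by auto
  have zs1: "Z h (scale e1 h)"
    by (rule Z_scale[OF wf, where g = "\<lambda>\<eta> b. of_bool (cevalH \<eta> b c)"]) (simp add: e1_def beval_ceval)
  have zs2: "Z h (scale e2 h)"
    by (rule Z_scale[OF wf, where g = "\<lambda>\<eta> b. 1 - of_bool (cevalH \<eta> b c)"]) (simp add: e2_def beval_ceval)
  have ds1: "D h (scale e1 h)" and ds2: "D h (scale e2 h)" by (simp_all add: D_same scale_def)
  have i1: "wf_hps (sem p1 (scale e1 h)) \<and> Z (scale e1 h) (sem p1 (scale e1 h)) \<and> D (scale e1 h) (sem p1 (scale e1 h))"
    using If(1)[OF ws1] .
  have i2: "wf_hps (sem p2 (scale e2 h)) \<and> Z (scale e2 h) (sem p2 (scale e2 h)) \<and> D (scale e2 h) (sem p2 (scale e2 h))"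
    using If(2)[OF ws2] .
  have eq: "sem (If c p1 p2) h = boxplus (sem p1 (scale e1 h)) (sem p2 (scale e2 h))"
    by (simp add: e1_def e2_def)
  show ?case unfolding eq
    using wf_boxplus[of "sem p1 (scale e1 h)" "sem p2 (scale e2 h)"]
      Z_boxplus[of "sem p1 (scale e1 h)" "sem p2 (scale e2 h)" h]
      D_boxplus[of h "sem p1 (scale e1 h)" "sem p2 (scale e2 h)"]
      i1 i2 zs1 zs2 ds1 ds2 Z_trans D_trans by meson
qed



lemma part1: "wf_hps h \<Longrightarrow> xi (sem p h) \<eta> \<noteq> (\<lambda>_. 0) \<Longrightarrow> \<exists>\<eta>' \<in> hsupport h. prefix \<eta>' \<eta>"
  using main_inv[of h p] unfolding Z_def hsupport_def by blast

theorem mainTheorem5: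
  shows "(\<forall>h p \<eta>. wf_hps h \<longrightarrow> wf_prog p \<longrightarrow> xi (sem p h) \<eta> \<noteq> (\<lambda>_. 0) \<longrightarrow>
            (\<exists>\<eta>' \<in> hsupport h. prefix \<eta>' \<eta>))
       \<and> (\<forall>h h' p q l. wf_hps h \<longrightarrow> wf_hps h' \<longrightarrow> wf_prog p \<longrightarrow> wf_prog q \<longrightarrow>
            hsupport h \<inter> hsupport h' = {} \<longrightarrow>
            (\<forall>\<eta> \<in> hsupport h \<union> hsupport h'. length \<eta> = l) \<longrightarrow>
            hsupport (sem p h) \<inter> hsupport (sem q h') = {})"
proof (intro conjI allI impI)
  fix h p \<eta> assume "wf_hps h" "xi (sem p h) \<eta> \<noteq> (\<lambda>_. 0)"
  then show "\<exists>\<eta>' \<in> hsupport h. prefix \<eta>' \<eta>" by (rule part1)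
next
  fix h h' p q l
  assume wf: "wf_hps h" "wf_hps h'" and dis: "hsupport h \<inter> hsupport h' = {}"
    and len: "\<forall>\<eta> \<in> hsupport h \<union> hsupport h'. length \<eta> = l"
  show "hsupport (sem p h) \<inter> hsupport (sem q h') = {}"
  proof (rule ccontr)
    assume "hsupport (sem p h) \<inter> hsupport (sem q h') \<noteq> {}"
    then obtain \<eta> where e1: "xi (sem p h) \<eta> \<noteq> (\<lambda>_. 0)" and e2: "xi (sem q h') \<eta> \<noteq> (\<lambda>_. 0)"
      by (auto simp: hsupport_def)
    obtain \<eta>1 where a1: "\<eta>1 \<in> hsupport h" "prefix \<eta>1 \<eta>" using part1[OF wf(1) e1] by blast
    obtain \<eta>2 where a2: "\<eta>2 \<in> hsupport h'" "prefix \<eta>2 \<eta>" using part1[OF wf(2) e2] by blast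
    have "length \<eta>1 = l" "length \<eta>2 = l" using len a1 a2 by auto
    then have "\<eta>1 = take l \<eta>" "\<eta>2 = take l \<eta>" using a1 a2 by (auto simp: prefix_def)
    then show False using a1 a2 dis by auto
  qed
qed


end
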